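(* For every $M\in\mathbb N$ and every prime power $q$, for almost all $a\in(\mathbb F_q^M)^\infty$ (uniform product measure), $$\lim_{n\to\infty}\frac{L_a(n)}{n}=\frac{M}{M+1}.$$
   Context: Let $q$ be a prime power and $M\ge1$. For $a=(a_{k,m})_{k\ge1,\,1\le m\le M}\in(\mathbb F_q^M)^\infty$ and $n\in\mathbb N_0$, the linear complexity $L_a(n)$ is the least $L\ge0$ such that there exist $c_1,\dots,c_L\in\mathbb F_q$ with $a_{k,m}=\sum_{i=1}^L c_i a_{k-i,m}$ for all $L<k\le n$ and all $1\le m\le M$ (a single linear feedback shift register of length $L$ generating the first $n$ terms of all $M$ sequences); $L_a(0)=0$. *)

theory Defs
  imports "HOL-Probability.Probability"
begin

text \<open>Linear complexity of a multisequence a = (a k m), k >= 1 (time), m :: 'm (one of the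
  M = CARD('m) component sequences), over a field 'a: the least L such that some
  coefficients c 1, ..., c L satisfy a k m = sum_{i=1..L} c i * a (k - i) m
  for all L < k <= n and all m.  The value a 0 is never used.\<close>

definition lin_compl :: "(nat \<Rightarrow> 'm \<Rightarrow> 'a::field) \<Rightarrow> nat \<Rightarrow> nat" where
  "lin_compl a n = (LEAST L. \<exists>c :: nat \<Rightarrow> 'a. \<forall>k. L < k \<and> k \<le> n \<longrightarrow>
      (\<forall>m. a k m = (\<Sum>i = 1..L. c i * a (k - i) m)))"

end

theory Submission
  imports Defs
begin

lemma sum_upd_add:
  fixes A :: "'c \<Rightarrow> 'a::field"
  assumes "finite J" "j0 \<in> J"
  shows "(\<Sum>j\<in>J. A j * (c(j0 := c j0 + t)) j) = (\<Sum>j\<in>J. A j * c j) + A j0 * t"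
proof -
  have "(\<Sum>j\<in>J. A j * (c(j0 := c j0 + t)) j) = (\<Sum>j\<in>J. A j * c j + (if j = j0 then A j * t else 0))"
    by (rule sum.cong) (auto simp: algebra_simps)
  also have "\<dots> = (\<Sum>j\<in>J. A j * c j) + A j0 * t"
    using assms by (simp add: sum.distrib)
  finally show ?thesis .
qed

lemma fredholm:
  fixes A :: "'r \<Rightarrow> 'c \<Rightarrow> 'a::field"
  assumes "finite I" "finite J"
  shows "(\<exists>c. \<forall>r\<in>I. (\<Sum>j\<in>J. A r j * c j) = b r) \<or>
         (\<exists>y. (\<forall>j\<in>J. (\<Sum>r\<in>I. y r * A r j) = 0) \<and> (\<Sum>r\<in>I. y r * b r) \<noteq> 0)"
  using assms(1)
proof (induction I arbitrary: A b rule: finite_induct)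
  case empty
  then show ?case by simp
next
  case (insert r0 I)
  show ?case
  proof (cases "\<forall>j\<in>J. A r0 j = 0")
    case True
    show ?thesis
    proof (cases "b r0 = 0")
      case False
      let ?y = "\<lambda>r. if r = r0 then (1::'a) else 0"
      have "\<forall>j\<in>J. (\<Sum>r\<in>insert r0 I. ?y r * A r j) = 0"
        using True insert(1,2) by (auto intro!: sum.neutral)
      moreover have "(\<Sum>r\<in>insert r0 I. ?y r * b r) \<noteq> 0"
      proof -
        have "(\<Sum>r\<in>I. ?y r * b r) = 0" using insert(2) by (auto intro!: sum.neutral)
        then show ?thesis using False insert(1,2) by simp
      qed
      ultimately show ?thesis by (intro disjI2 exI[of _ ?y] conjI)
    next
      case b0: True
      from insert.IH[of A b] show ?thesis
      proof
        assume "\<exists>c. \<forall>r\<in>I. (\<Sum>j\<in>J. A r j * c j) = b r"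
        then show ?thesis using True b0 by auto
      next
        assume "\<exists>y. (\<forall>j\<in>J. (\<Sum>r\<in>I. y r * A r j) = 0) \<and> (\<Sum>r\<in>I. y r * b r) \<noteq> 0"
        then obtain y where y: "\<forall>j\<in>J. (\<Sum>r\<in>I. y r * A r j) = 0" "(\<Sum>r\<in>I. y r * b r) \<noteq> 0" by blast
        show ?thesis
          apply (rule disjI2, rule exI[of _ y])
          using y True b0 insert(1,2) by simp
      qed
    qed
  next
    case False
    then obtain j0 where j0: "j0 \<in> J" "A r0 j0 \<noteq> 0" by blast
    define lam where "lam r = A r j0 / A r0 j0" for r
    define A' where "A' r j = A r j - lam r * A r0 j" for r j
    define b' where "b' r = b r - lam r * b r0" for r
    have A'j0: "A' r j0 = 0" for r using j0 by (simp add: A'_def lam_def)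
    from insert.IH[of A' b'] show ?thesis
    proof
      assume "\<exists>c. \<forall>r\<in>I. (\<Sum>j\<in>J. A' r j * c j) = b' r"
      then obtain c' where c': "\<forall>r\<in>I. (\<Sum>j\<in>J. A' r j * c' j) = b' r" by blast
      define t where "t = (b r0 - (\<Sum>j\<in>J. A r0 j * c' j)) / A r0 j0"
      define c where "c = c'(j0 := c' j0 + t)"
      have row0: "(\<Sum>j\<in>J. A r0 j * c j) = b r0"
        unfolding c_def using j0 assms(2) by (subst sum_upd_add) (simp_all add: t_def)
      have "(\<Sum>j\<in>J. A r j * c j) = b r" if r: "r \<in> I" for r
      proof -
        have "(\<Sum>j\<in>J. A r j * c j) = (\<Sum>j\<in>J. A' r j * c j + lam r * (A r0 j * c j))"
          by (rule sum.cong) (auto simp: A'_def algebra_simps)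
        also have "\<dots> = (\<Sum>j\<in>J. A' r j * c j) + lam r * (\<Sum>j\<in>J. A r0 j * c j)"
          by (simp add: sum.distrib sum_distrib_left)
        also have "(\<Sum>j\<in>J. A' r j * c j) = (\<Sum>j\<in>J. A' r j * c' j)"
          unfolding c_def using j0 assms(2) by (subst sum_upd_add) (simp_all add: A'j0)
        finally show ?thesis using c' r row0 by (simp add: b'_def)
      qed
      with row0 show ?thesis by auto
    next
      assume "\<exists>y. (\<forall>j\<in>J. (\<Sum>r\<in>I. y r * A' r j) = 0) \<and> (\<Sum>r\<in>I. y r * b' r) \<noteq> 0"
      then obtain y' where y': "\<forall>j\<in>J. (\<Sum>r\<in>I. y' r * A' r j) = 0" "(\<Sum>r\<in>I. y' r * b' r) \<noteq> 0" by blast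
      define s where "s = (\<Sum>r\<in>I. y' r * lam r)"
      define y where "y = y'(r0 := - s)"
      have yI: "(\<Sum>r\<in>I. y r * f r) = (\<Sum>r\<in>I. y' r * f r)" for f
        using insert(2) by (intro sum.cong) (auto simp: y_def)
      have "(\<Sum>r\<in>insert r0 I. y r * A r j) = 0" if j: "j \<in> J" for j
      proof -
        have "(\<Sum>r\<in>I. y' r * A r j) = (\<Sum>r\<in>I. y' r * A' r j + (y' r * lam r) * A r0 j)"
          by (rule sum.cong) (auto simp: A'_def algebra_simps)
        also have "\<dots> = s * A r0 j"
          using y' j by (simp add: sum.distrib sum_distrib_right s_def)
        finally show ?thesis using insert(1,2) yI by (simp add: y_def)
      qed
      moreover have "(\<Sum>r\<in>insert r0 I. y r * b r) \<noteq> 0"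
      proof -
        have "(\<Sum>r\<in>I. y' r * b r) = (\<Sum>r\<in>I. y' r * b' r + (y' r * lam r) * b r0)"
          by (rule sum.cong) (auto simp: b'_def algebra_simps)
        also have "\<dots> = (\<Sum>r\<in>I. y' r * b' r) + s * b r0"
          by (simp add: sum.distrib sum_distrib_right s_def)
        finally show ?thesis using insert(1,2) yI y' by (simp add: y_def)
      qed
      ultimately show ?thesis by blast
    qed
  qed
qed

definition Mf :: "nat \<Rightarrow> ('m::finite \<Rightarrow> 'a::{finite,field}) measure" where
  "Mf = (\<lambda>k. measure_pmf (pmf_of_set UNIV))"

definition cylset :: "nat \<Rightarrow> (nat \<Rightarrow> 'm::finite \<Rightarrow> 'a::{finite,field}) set \<Rightarrow> (nat \<Rightarrow> 'm \<Rightarrow> 'a) set" where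
  "cylset n S = (\<Union>x\<in>S. prod_emb {1..} Mf {1..n} (\<Pi>\<^sub>E k\<in>{1..n}. {x k}))"

lemma prob_Mu: "prob_space (\<Pi>\<^sub>M k\<in>{1::nat..}. (Mf k :: ('m::finite \<Rightarrow> 'a::{finite,field}) measure))"
  by (rule prob_space_PiM) (simp add: Mf_def prob_space_measure_pmf)

lemma cylset_sets: "finite S \<Longrightarrow> cylset n S \<in> sets (\<Pi>\<^sub>M k\<in>{1::nat..}. Mf k)"
  unfolding cylset_def
  by (intro sets.finite_UN sets_PiM_I) (auto simp: Mf_def)

lemma cylset_mem:
  assumes "a \<in> space (\<Pi>\<^sub>M k\<in>{1::nat..}. Mf k)" "restrict a {1..n} \<in> S"
  shows "a \<in> cylset n S"
  using assms unfolding cylset_def prod_emb_def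
  by (auto simp: space_PiM Mf_def intro!: bexI[of _ "restrict a {1..n}"])

lemma cyl_measure:
  fixes x :: "nat \<Rightarrow> 'm::finite \<Rightarrow> 'a::{finite,field}"
  shows "measure (\<Pi>\<^sub>M k\<in>{1::nat..}. Mf k) (prod_emb {1..} Mf {1..n} (\<Pi>\<^sub>E k\<in>{1..n}. {x k}))
     = (1 / real CARD('m::finite \<Rightarrow> 'a::{finite,field})) ^ n"
proof -
  have "emeasure (\<Pi>\<^sub>M k\<in>{1::nat..}. Mf k) (prod_emb {1..} Mf {1..n} (\<Pi>\<^sub>E k\<in>{1..n}. {x k}))
     = (\<Prod>k\<in>{1..n}. emeasure (Mf k) {x k})"
    by (rule emeasure_PiM_emb) (auto simp: Mf_def prob_space_measure_pmf)
  also have "\<dots> = (\<Prod>k\<in>{1..n}. ennreal (1 / real CARD('m \<Rightarrow> 'a)))"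
    by (simp add: Mf_def emeasure_pmf_single)
  also have "\<dots> = ennreal ((1 / real CARD('m \<Rightarrow> 'a)) ^ n)"
    by (simp add: prod_ennreal ennreal_power)
  finally show ?thesis by (simp add: measure_def)
qed

lemma cylset_measure:
  fixes S :: "(nat \<Rightarrow> 'm::finite \<Rightarrow> 'a::{finite,field}) set"
  assumes "finite S"
  shows "measure (\<Pi>\<^sub>M k\<in>{1::nat..}. Mf k) (cylset n S) \<le> real (card S) * (1 / real CARD('m::finite \<Rightarrow> 'a::{finite,field})) ^ n"
proof -
  have "measure (\<Pi>\<^sub>M k\<in>{1::nat..}. Mf k) (cylset n S) \<le>
     (\<Sum>x\<in>S. measure (\<Pi>\<^sub>M k\<in>{1::nat..}. Mf k) (prod_emb {1..} Mf {1..n} (\<Pi>\<^sub>E k\<in>{1..n}. {x k})))"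
    unfolding cylset_def
    by (rule measure_UNION_le) (use assms in \<open>auto intro!: sets_PiM_I simp: Mf_def\<close>)
  also have "\<dots> = real (card S) * (1 / real CARD('m \<Rightarrow> 'a)) ^ n"
    by (simp only: cyl_measure) simp
  finally show ?thesis .
qed

definition good :: "nat \<Rightarrow> nat \<Rightarrow> (nat \<Rightarrow> 'm \<Rightarrow> 'a::field) \<Rightarrow> bool" where
  "good L n a = (\<exists>c::nat\<Rightarrow>'a. \<forall>k. L < k \<and> k \<le> n \<longrightarrow> (\<forall>m. a k m = (\<Sum>i = 1..L. c i * a (k - i) m)))"

lemma lin_compl_good: "lin_compl a n = (LEAST L. good L n a)"
  by (simp add: lin_compl_def good_def)

lemma good_n: "good n n a"
  by (auto simp: good_def)

lemma good_mono:
  assumes "good L0 n a" "L0 \<le> L"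
  shows "good L n a"
proof -
  obtain c where c: "\<forall>k. L0 < k \<and> k \<le> n \<longrightarrow> (\<forall>m. a k m = (\<Sum>i = 1..L0. c i * a (k - i) m))"
    using assms(1) by (auto simp: good_def)
  define c' where "c' i = (if i \<le> L0 then c i else 0)" for i
  have "(\<Sum>i = 1..L. c' i * a (k - i) m) = (\<Sum>i = 1..L0. c i * a (k - i) m)" for k m
    by (rule sum.mono_neutral_cong_right) (use assms(2) in \<open>auto simp: c'_def\<close>)
  then show ?thesis
    unfolding good_def using c assms(2) by (intro exI[of _ c']) auto
qed

lemma lc_le_iff: "lin_compl a n \<le> L \<longleftrightarrow> good L n a"
proof
  assume "lin_compl a n \<le> L"
  moreover have "good (lin_compl a n) n a"
    unfolding lin_compl_good by (rule LeastI[of _ n]) (rule good_n)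
  ultimately show "good L n a" using good_mono by blast
next
  assume "good L n a"
  then show "lin_compl a n \<le> L" unfolding lin_compl_good by (rule Least_le)
qed

lemma good_cong:
  assumes "\<forall>k\<in>{1..n}. a k = b k"
  shows "good L n a \<longleftrightarrow> good L n b"
proof -
  have "(a k m = (\<Sum>i = 1..L. c i * a (k - i) m)) \<longleftrightarrow> (b k m = (\<Sum>i = 1..L. c i * b (k - i) m))"
    if "L < k" "k \<le> n" for k m and c :: "nat \<Rightarrow> 'b"
  proof -
    have "(\<Sum>i = 1..L. c i * a (k - i) m) = (\<Sum>i = 1..L. c i * b (k - i) m)"
    proof (rule sum.cong)
      fix i assume "i \<in> {1..L}"
      then have "k - i \<in> {1..n}" using that by auto
      then show "c i * a (k - i) m = c i * b (k - i) m" using assms by auto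
    qed simp
    moreover have "a k = b k" using that assms by auto
    ultimately show ?thesis by simp
  qed
  then have "(\<forall>k. L < k \<and> k \<le> n \<longrightarrow> (\<forall>m. a k m = (\<Sum>i = 1..L. c i * a (k - i) m))) \<longleftrightarrow>
     (\<forall>k. L < k \<and> k \<le> n \<longrightarrow> (\<forall>m. b k m = (\<Sum>i = 1..L. c i * b (k - i) m)))" for c
    by simp
  then show ?thesis unfolding good_def by simp
qed

lemma lc_restrict: "lin_compl a n = lin_compl (restrict a {1..n}) n"
  unfolding lin_compl_good using good_cong[of n a "restrict a {1..n}"] by simp

definition Pn :: "nat \<Rightarrow> (nat \<Rightarrow> 'm::finite \<Rightarrow> 'a::{finite,field}) set" where
  "Pn n = (\<Pi>\<^sub>E k\<in>{1..n}. UNIV)"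

lemma finite_Pn: "finite (Pn n)"
  unfolding Pn_def by (rule finite_PiE) auto

lemma uniq_rec:
  fixes x x' :: "nat \<Rightarrow> 'm::finite \<Rightarrow> 'a::{finite,field}"
  assumes "x \<in> Pn n" "x' \<in> Pn n"
    and "\<forall>k. L < k \<and> k \<le> n \<longrightarrow> (\<forall>m. x k m = (\<Sum>i = 1..L. c i * x (k - i) m))"
    and "\<forall>k. L < k \<and> k \<le> n \<longrightarrow> (\<forall>m. x' k m = (\<Sum>i = 1..L. c' i * x' (k - i) m))"
    and "\<forall>i\<in>{1..L}. c i = c' i" "\<forall>k\<in>{1..L}. x k = x' k"
  shows "x = x'"
proof -
  have "x k = x' k" for k
  proof (induction k rule: less_induct)
    case (less k)
    show ?case
    proof (cases "k \<in> {1..L}")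
      case True then show ?thesis using assms(6) by auto
    next
      case nk: False
      show ?thesis
      proof (cases "k \<in> {1..n}")
        case False
        then show ?thesis using assms(1,2) unfolding Pn_def by (metis PiE_arb)
      next
        case True
        then have k: "L < k" "k \<le> n" using nk by auto
        show ?thesis
        proof
          fix m
          have "x k m = (\<Sum>i = 1..L. c i * x (k - i) m)" using assms(3) k by auto
          also have "\<dots> = (\<Sum>i = 1..L. c' i * x' (k - i) m)"
          proof (rule sum.cong)
            fix i assume i: "i \<in> {1..L}"
            then have "k - i < k" using k by auto
            then have "x (k - i) = x' (k - i)" by (rule less)
            then show "c i * x (k - i) m = c' i * x' (k - i) m" using assms(5) i by simp
          qed simp
          also have "\<dots> = x' k m" using assms(4) k by auto
          finally show "x k m = x' k m" .
        qed
      qed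
    qed
  qed
  then show ?thesis by auto
qed

lemma card_low:
  "card {x \<in> Pn n. good L n (x :: nat \<Rightarrow> 'm::finite \<Rightarrow> 'a::{finite,field})}
     \<le> CARD('a) ^ L * CARD('m \<Rightarrow> 'a) ^ L"
proof -
  define R where "R c x = (\<forall>k. L < k \<and> k \<le> n \<longrightarrow> (\<forall>m. x k m = (\<Sum>i = 1..L. c i * x (k - i) m)))"
    for c :: "nat \<Rightarrow> 'a" and x :: "nat \<Rightarrow> 'm \<Rightarrow> 'a"
  define f where "f x = (restrict (SOME c. R c x) {1..L}, restrict x {1..L})" for x
  let ?S = "{x \<in> Pn n. good L n (x :: nat \<Rightarrow> 'm \<Rightarrow> 'a)}"
  let ?T = "(\<Pi>\<^sub>E i\<in>{1..L}. (UNIV :: 'a set)) \<times> (\<Pi>\<^sub>E i\<in>{1..L}. (UNIV :: ('m \<Rightarrow> 'a) set))"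
  have Rs: "R (SOME c. R c x) x" if "x \<in> ?S" for x
  proof -
    from that obtain c where "R c x" unfolding good_def R_def by auto
    then show ?thesis by (rule someI[where P="\<lambda>c. R c x"])
  qed
  have "inj_on f ?S"
  proof (rule inj_onI)
    fix x x' assume xs: "x \<in> ?S" "x' \<in> ?S" and "f x = f x'"
    then have e1: "restrict (SOME c. R c x) {1..L} = restrict (SOME c. R c x') {1..L}"
      and e2: "restrict x {1..L} = restrict x' {1..L}" by (simp_all add: f_def)
    have e: "\<forall>i\<in>{1..L}. (SOME c. R c x) i = (SOME c. R c x') i" "\<forall>k\<in>{1..L}. x k = x' k"
    proof -
      show "\<forall>i\<in>{1..L}. (SOME c. R c x) i = (SOME c. R c x') i"
      proof
        fix i assume "i \<in> {1..L}" with fun_cong[OF e1, of i] show "(SOME c. R c x) i = (SOME c. R c x') i" by simp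
      qed
      show "\<forall>i\<in>{1..L}. x i = x' i"
      proof
        fix i assume "i \<in> {1..L}" with fun_cong[OF e2, of i] show "x i = x' i" by simp
      qed
    qed
    obtain c1 c2 where c12: "R c1 x" "R c2 x'" "\<forall>i\<in>{1..L}. c1 i = c2 i"
      using Rs[OF xs(1)] Rs[OF xs(2)] e(1) by blast
    have "x \<in> Pn n" "x' \<in> Pn n" using xs by auto
    from uniq_rec[OF this c12(1)[unfolded R_def] c12(2)[unfolded R_def] c12(3) e(2)]
    show "x = x'" .

  qed
  moreover have "f ` ?S \<subseteq> ?T" by (auto simp: f_def)
  moreover have "finite ?T" by (intro finite_cartesian_product finite_PiE) auto
  ultimately have "card ?S \<le> card ?T" by (rule card_inj_on_le)
  also have "card ?T = CARD('a) ^ L * CARD('m \<Rightarrow> 'a) ^ L"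
    by (simp add: card_cartesian_product card_PiE)
  finally show ?thesis .
qed

definition Irows :: "nat \<Rightarrow> nat \<Rightarrow> (nat \<times> 'm::finite) set" where
  "Irows L n = {L+1..n} \<times> UNIV"

definition Sy :: "nat \<Rightarrow> nat \<Rightarrow> (nat \<times> 'm::finite \<Rightarrow> 'a::{finite,field}) \<Rightarrow> (nat \<Rightarrow> 'm \<Rightarrow> 'a) set" where
  "Sy L n y = {x \<in> Pn n. \<forall>i\<in>{1..L}. (\<Sum>r\<in>Irows L n. y r * x (fst r - i) (snd r)) = 0}"

definition Yset :: "nat \<Rightarrow> nat \<Rightarrow> (nat \<times> 'm::finite \<Rightarrow> 'a::{finite,field}) set" where
  "Yset L n = {y \<in> (\<Pi>\<^sub>E r\<in>Irows L n. UNIV). \<exists>r\<in>Irows L n. y r \<noteq> 0}"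

lemma finite_Irows: "finite (Irows L n)"
  by (simp add: Irows_def)

lemma high_sub:
  fixes x :: "nat \<Rightarrow> 'm::finite \<Rightarrow> 'a::{finite,field}"
  assumes "x \<in> Pn n" "\<not> good L n x"
  shows "\<exists>y\<in>Yset L n. x \<in> Sy L n y"
proof -
  let ?I = "Irows L n :: (nat \<times> 'm) set"
  let ?A = "\<lambda>r j. x (fst r - j) (snd r)"
  let ?b = "\<lambda>r. x (fst r) (snd r)"
  from fredholm[OF finite_Irows[of L n] finite_atLeastAtMost[of 1 L], of ?A ?b]
  show ?thesis
  proof
    assume "\<exists>c. \<forall>r\<in>?I. (\<Sum>j\<in>{1..L}. ?A r j * c j) = ?b r"
    then obtain c where c: "\<forall>r\<in>?I. (\<Sum>j\<in>{1..L}. ?A r j * c j) = ?b r" by blast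
    have "good L n x"
      unfolding good_def
    proof (intro exI allI impI)
      fix k m assume k: "L < k \<and> k \<le> n"
      then have "(k, m) \<in> ?I" by (auto simp: Irows_def)
      with c have "x k m = (\<Sum>j\<in>{1..L}. x (k - j) m * c j)" by force
      then show "x k m = (\<Sum>i = 1..L. c i * x (k - i) m)" by (simp add: mult.commute)
    qed
    with assms show ?thesis by simp
  next
    assume "\<exists>y. (\<forall>j\<in>{1..L}. (\<Sum>r\<in>?I. y r * ?A r j) = 0) \<and> (\<Sum>r\<in>?I. y r * ?b r) \<noteq> 0"
    then obtain y where y: "\<forall>j\<in>{1..L}. (\<Sum>r\<in>?I. y r * ?A r j) = 0" "(\<Sum>r\<in>?I. y r * ?b r) \<noteq> 0"
      by blast
    have ex: "\<exists>r\<in>?I. y r \<noteq> 0"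
    proof (rule ccontr)
      assume "\<not> ?thesis"
      then have "(\<Sum>r\<in>?I. y r * ?b r) = 0" by (auto intro!: sum.neutral)
      with y(2) show False by simp
    qed
    have eqs: "(\<Sum>r\<in>?I. restrict y ?I r * f r) = (\<Sum>r\<in>?I. y r * f r)" for f :: "nat \<times> 'm \<Rightarrow> 'a"
      by (rule sum.cong) auto
    have "restrict y ?I \<in> Yset L n" using ex by (auto simp: Yset_def)
    moreover have "x \<in> Sy L n (restrict y ?I)"
      using assms(1) y(1) by (simp add: Sy_def eqs)
    ultimately show ?thesis by blast
  qed
qed

lemma card_Sy:
  fixes y :: "nat \<times> 'm::finite \<Rightarrow> 'a::{finite,field}"
  assumes "y \<in> Yset L n"
  shows "card (Sy L n y) \<le> CARD('a) ^ (n * CARD('m) - L)"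
proof -
  let ?I = "Irows L n :: (nat \<times> 'm) set"
  obtain r0 where r0: "r0 \<in> ?I" "y r0 \<noteq> 0" using assms by (auto simp: Yset_def)
  define m0 where "m0 = snd r0"
  define K where "K = {k \<in> {L+1..n}. y (k, m0) \<noteq> 0}"
  have "fst r0 \<in> K" using r0 by (auto simp: K_def m0_def Irows_def)
  then have Kne: "K \<noteq> {}" and Kfin: "finite K" by (auto simp: K_def)
  define ks where "ks = Max K"
  have ksK: "ks \<in> K" using Kne Kfin by (simp add: ks_def)
  then have ks: "L + 1 \<le> ks" "ks \<le> n" "y (ks, m0) \<noteq> 0" by (auto simp: K_def)
  have ksmax: "k \<le> ks" if "k \<in> K" for k using that Kfin by (simp add: ks_def)
  define Pset where "Pset = (\<lambda>i. (ks - i, m0)) ` {1..L}"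
  define D where "D = ({1..n} \<times> (UNIV :: 'm set)) - Pset"
  define g where "g x = restrict (\<lambda>p. x (fst p) (snd p) :: 'a) D" for x :: "nat \<Rightarrow> 'm \<Rightarrow> 'a"
  have Psub: "Pset \<subseteq> {1..n} \<times> UNIV" using ks by (auto simp: Pset_def)
  have "inj_on (\<lambda>i. (ks - i, m0)) {1..L}" using ks by (auto simp: inj_on_def)
  then have cardP: "card Pset = L" by (simp add: Pset_def card_image)
  have cardD: "card D = n * CARD('m) - L"
    unfolding D_def using Psub cardP by (simp add: card_Diff_subset finite_subset card_cartesian_product)
  have ks_in: "(ks, m0) \<in> ?I" using ks by (auto simp: Irows_def)
  have "inj_on g (Sy L n y)"
  proof (rule inj_onI)
    fix x x' assume xs: "x \<in> Sy L n y" "x' \<in> Sy L n y" and "g x = g x'"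
    have agree: "x k m = x' k m" if "(k, m) \<in> D" for k m
      using fun_cong[OF \<open>g x = g x'\<close>, of "(k, m)"] that by (simp add: g_def)
    have xP: "x \<in> Pn n" "x' \<in> Pn n" using xs by (auto simp: Sy_def)
    have eq: "(\<Sum>r\<in>?I. y r * x (fst r - i) (snd r)) = 0" "(\<Sum>r\<in>?I. y r * x' (fst r - i) (snd r)) = 0"
      if "i \<in> {1..L}" for i using xs that by (auto simp: Sy_def)
    have "x k = x' k" for k
    proof (induction k rule: less_induct)
      case (less k)
      show ?case
      proof
        fix m
        show "x k m = x' k m"
        proof (cases "k \<in> {1..n}")
          case False
          then show ?thesis using xP unfolding Pn_def by (metis PiE_arb)
        next
          case kn: True
          show ?thesis
          proof (cases "(k, m) \<in> D")
            case True then show ?thesis by (rule agree)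
          next
            case False
            then have "(k, m) \<in> Pset" using kn by (auto simp: D_def)
            then obtain i where i: "i \<in> {1..L}" "k = ks - i" "m = m0" by (auto simp: Pset_def)
            have oth: "(\<Sum>r\<in>?I - {(ks, m0)}. y r * x (fst r - i) (snd r)) =
                       (\<Sum>r\<in>?I - {(ks, m0)}. y r * x' (fst r - i) (snd r))"
            proof (rule sum.cong)
              fix r assume r: "r \<in> ?I - {(ks, m0)}"
              obtain kr mr where rr: "r = (kr, mr)" by fastforce
              have kr: "L + 1 \<le> kr" "kr \<le> n" using r rr by (auto simp: Irows_def)
              show "y r * x (fst r - i) (snd r) = y r * x' (fst r - i) (snd r)"
              proof (cases "y r = 0")
                case False
                show ?thesis
                proof (cases "mr = m0")
                  case False
                  then have "(kr - i, mr) \<in> D" using kr i by (auto simp: D_def Pset_def)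
                  then show ?thesis using agree rr by simp
                next
                  case True
                  then have "kr \<in> K" using kr False rr by (auto simp: K_def)
                  then have "kr \<le> ks" by (rule ksmax)
                  moreover have "kr \<noteq> ks" using r rr True by auto
                  ultimately have "kr - i < k" using i kr by auto
                  then have "x (kr - i) = x' (kr - i)" by (rule less)
                  then show ?thesis using rr by simp
                qed
              qed simp
            qed simp
            have A: "y (ks, m0) * x k m0 + (\<Sum>r\<in>?I - {(ks, m0)}. y r * x (fst r - i) (snd r)) = 0"
              using eq(1)[OF i(1)] sum.remove[OF finite_Irows ks_in, of "\<lambda>r. y r * x (fst r - i) (snd r)"] i
              by simp
            have B: "y (ks, m0) * x' k m0 + (\<Sum>r\<in>?I - {(ks, m0)}. y r * x' (fst r - i) (snd r)) = 0"
              using eq(2)[OF i(1)] sum.remove[OF finite_Irows ks_in, of "\<lambda>r. y r * x' (fst r - i) (snd r)"] i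
              by simp
            have "y (ks, m0) * x k m0 = - (\<Sum>r\<in>?I - {(ks, m0)}. y r * x (fst r - i) (snd r))"
              using A by (simp add: eq_neg_iff_add_eq_0)
            moreover have "y (ks, m0) * x' k m0 = - (\<Sum>r\<in>?I - {(ks, m0)}. y r * x' (fst r - i) (snd r))"
              using B by (simp add: eq_neg_iff_add_eq_0)
            ultimately have "y (ks, m0) * x k m0 = y (ks, m0) * x' k m0" using oth by simp
            then show ?thesis using ks(3) i by simp
          qed
        qed
      qed
    qed
    then show "x = x'" by auto
  qed
  moreover have "g ` Sy L n y \<subseteq> (\<Pi>\<^sub>E p\<in>D. (UNIV :: 'a set))" by (auto simp: g_def)
  moreover have "finite (\<Pi>\<^sub>E p\<in>D. (UNIV :: 'a set))" by (intro finite_PiE) (auto simp: D_def)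
  ultimately have "card (Sy L n y) \<le> card (\<Pi>\<^sub>E p\<in>D. (UNIV :: 'a set))" by (rule card_inj_on_le)
  also have "\<dots> = CARD('a) ^ (n * CARD('m) - L)"
    using cardD by (simp add: card_PiE D_def)
  finally show ?thesis .
qed

lemma card_high:
  "card {x \<in> Pn n. \<not> good L n (x :: nat \<Rightarrow> 'm::finite \<Rightarrow> 'a::{finite,field})}
     \<le> CARD('a) ^ ((n - L) * CARD('m)) * CARD('a) ^ (n * CARD('m) - L)"
proof -
  let ?Y = "Yset L n :: (nat \<times> 'm \<Rightarrow> 'a) set"
  have finY: "finite ?Y"
    by (rule finite_subset[of _ "\<Pi>\<^sub>E r\<in>Irows L n. UNIV"]) (auto simp: Yset_def finite_Irows intro!: finite_PiE)
  have "{x \<in> Pn n. \<not> good L n (x :: nat \<Rightarrow> 'm \<Rightarrow> 'a)} \<subseteq> (\<Union>y\<in>?Y. Sy L n y)"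
    using high_sub by blast
  moreover have "finite (\<Union>y\<in>?Y. Sy L n y)"
    using finY by (auto intro: finite_subset[OF _ finite_Pn] simp: Sy_def)
  ultimately have "card {x \<in> Pn n. \<not> good L n (x :: nat \<Rightarrow> 'm \<Rightarrow> 'a)} \<le> card (\<Union>y\<in>?Y. Sy L n y)"
    by (rule card_mono[rotated])
  also have "\<dots> \<le> (\<Sum>y\<in>?Y. card (Sy L n y))" by (rule card_UN_le[OF finY])
  also have "\<dots> \<le> (\<Sum>y\<in>?Y. CARD('a) ^ (n * CARD('m) - L))" by (rule sum_mono) (rule card_Sy)
  also have "\<dots> = card ?Y * CARD('a) ^ (n * CARD('m) - L)" by simp
  also have "card ?Y \<le> card (\<Pi>\<^sub>E r\<in>(Irows L n :: (nat \<times> 'm) set). (UNIV :: 'a set))"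
    by (intro card_mono finite_PiE finite_Irows) (auto simp: Yset_def)
  also have "card (\<Pi>\<^sub>E r\<in>(Irows L n :: (nat \<times> 'm) set). (UNIV :: 'a set)) = CARD('a) ^ ((n - L) * CARD('m))"
    by (simp add: card_PiE finite_Irows Irows_def card_cartesian_product)
  finally show ?thesis by simp
qed

lemma BC_aux:
  fixes S :: "nat \<Rightarrow> (nat \<Rightarrow> 'm::finite \<Rightarrow> 'a::{finite,field}) set"
  assumes sub: "\<And>n. S n \<subseteq> Pn n"
    and bound: "\<And>n. real (card (S n)) * (1 / real CARD('m \<Rightarrow> 'a)) ^ n \<le> C * r ^ n"
    and r: "0 \<le> r" "r < 1"
  shows "AE a in (\<Pi>\<^sub>M k\<in>{1::nat..}. Mf k). eventually (\<lambda>n. restrict a {1..n} \<notin> S n) sequentially"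
proof -
  let ?Mu = "(\<Pi>\<^sub>M k\<in>{1::nat..}. (Mf k :: ('m \<Rightarrow> 'a) measure))"
  interpret P: prob_space ?Mu by (rule prob_Mu)
  have finS: "finite (S n)" for n using sub finite_Pn by (rule finite_subset)
  have meas: "cylset n (S n) \<in> sets ?Mu" for n using finS by (rule cylset_sets)
  have mb: "measure ?Mu (cylset n (S n)) \<le> C * r ^ n" for n
    using cylset_measure[OF finS[of n], of n] bound[of n] by linarith
  have summ: "summable (\<lambda>n. measure ?Mu (cylset n (S n)))"
  proof (rule summable_comparison_test)
    show "\<exists>N. \<forall>n\<ge>N. norm (measure ?Mu (cylset n (S n))) \<le> C * r ^ n" using mb by auto
    show "summable (\<lambda>n. C * r ^ n)" using r by (intro summable_mult summable_geometric) auto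
  qed
  have fin: "emeasure ?Mu (cylset n (S n)) < \<infinity>" for n
    using P.emeasure_finite[of "cylset n (S n)"] by (simp add: less_top)
  have "AE a in ?Mu. eventually (\<lambda>n. a \<in> space ?Mu - cylset n (S n)) sequentially"
    by (rule borel_cantelli_AE1[of "\<lambda>n. cylset n (S n)" ?Mu, OF meas fin summ])
  then show ?thesis
  proof (rule AE_mp[OF _ AE_I2[OF impI]])
    fix a assume "a \<in> space ?Mu" "eventually (\<lambda>n. a \<in> space ?Mu - cylset n (S n)) sequentially"
    then show "eventually (\<lambda>n. restrict a {1..n} \<notin> S n) sequentially"
      by (elim eventually_mono) (use cylset_mem in blast)
  qed
qed

lemma card_ge2: "2 \<le> CARD('a::{finite,field})"
proof -
  have "card {0::'a, 1} = 2" by simp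
  moreover have "card {0::'a, 1} \<le> CARD('a)" by (rule card_mono) auto
  ultimately show ?thesis by simp
qed

lemma card_Q: "CARD('m::finite \<Rightarrow> 'a::{finite,field}) = CARD('a) ^ CARD('m)"
  using card_ge2[where 'a='a] by (simp add: card_fun)

lemma num_low:
  fixes q :: real assumes "q > 0"
  shows "q ^ L * (q ^ M) ^ L * (1 / q ^ M) ^ n = q powr (real L + real M * real L - real M * real n)"
proof -
  have "q ^ L * (q ^ M) ^ L * (1 / q ^ M) ^ n = q ^ (L + M * L) / q ^ (M * n)"
    by (simp add: power_add power_mult power_divide)
  also have "\<dots> = q powr (real (L + M * L)) / q powr (real (M * n))"
    using assms by (simp only: powr_realpow)
  also have "\<dots> = q powr (real L + real M * real L - real M * real n)"
    by (simp add: powr_diff)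
  finally show ?thesis .
qed

lemma num_high:
  fixes q :: real assumes "q > 0" "L \<le> n" "L \<le> n * M"
  shows "q ^ ((n - L) * M) * q ^ (n * M - L) * (1 / q ^ M) ^ n = q powr (real n * real M - real L * real M - real L)"
proof -
  have "q ^ ((n - L) * M) * q ^ (n * M - L) * (1 / q ^ M) ^ n = q ^ ((n - L) * M + (n * M - L)) / q ^ (M * n)"
    by (simp add: power_add power_mult power_divide)
  also have "\<dots> = q powr (real ((n - L) * M + (n * M - L))) / q powr (real (M * n))"
    using assms by (simp only: powr_realpow)
  also have "\<dots> = q powr (real n * real M - real L * real M - real L)"
  proof -
    have e: "real ((n - L) * M + (n * M - L)) - real (M * n) = real n * real M - real L * real M - real L"
    proof -
      have a: "real ((n - L) * M) = (real n - real L) * real M" using assms by (simp add: of_nat_diff)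
      have b: "real (n * M - L) = real n * real M - real L" using assms by (simp add: of_nat_diff mult.commute)
      show ?thesis by (simp only: of_nat_add a b) (simp add: algebra_simps)
    qed
    show ?thesis by (simp only: powr_diff[symmetric] e)
  qed
  finally show ?thesis .
qed

lemma low_AE:
  fixes \<epsilon> :: real
  assumes eps: "0 < \<epsilon>" "\<epsilon> \<le> 1/2"
  shows "AE a in (\<Pi>\<^sub>M k\<in>{1::nat..}. (Mf k :: ('m::finite \<Rightarrow> 'a::{finite,field}) measure)).
           eventually (\<lambda>n. (real CARD('m) / (real CARD('m) + 1) - \<epsilon>) * real n \<le> real (lin_compl a n)) sequentially"
proof -
  define M where "M = CARD('m)"
  define \<alpha> where "\<alpha> = real M / (real M + 1)"
  define q where "q = real CARD('a)"
  have q: "q \<ge> 2" using card_ge2[where 'a='a] by (simp add: q_def)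
  have M1: "M \<ge> 1" by (simp add: M_def Suc_le_eq)
  have \<alpha>M: "(real M + 1) * \<alpha> = real M" by (simp add: \<alpha>_def)
  have \<alpha>half: "\<alpha> \<ge> 1/2" using M1 by (simp add: \<alpha>_def field_simps)
  define Ll where "Ll n = nat \<lfloor>(\<alpha> - \<epsilon>) * real n\<rfloor>" for n
  define S where "S n = {x \<in> Pn n. good (Ll n) n (x :: nat \<Rightarrow> 'm \<Rightarrow> 'a)}" for n
  define r where "r = q powr (- ((real M + 1) * \<epsilon>))"
  have r: "0 \<le> r" "r < 1" using q eps by (auto simp: r_def intro!: powr_less_one)
  have bound: "real (card (S n)) * (1 / real CARD('m \<Rightarrow> 'a)) ^ n \<le> 1 * r ^ n" for n
  proof -
    have Ll: "real (Ll n) \<le> (\<alpha> - \<epsilon>) * real n"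
      using eps \<alpha>half by (simp add: Ll_def)
    have "card (S n) \<le> CARD('a) ^ Ll n * CARD('m \<Rightarrow> 'a) ^ Ll n"
      using card_low[where 'm='m and 'a='a, of n "Ll n"] by (simp add: S_def)
    then have "real (card (S n)) \<le> real (CARD('a) ^ Ll n * CARD('m \<Rightarrow> 'a) ^ Ll n)"
      by (simp only: of_nat_le_iff)
    also have "\<dots> = q ^ Ll n * (q ^ M) ^ Ll n" by (simp add: q_def M_def card_Q)
    finally have "real (card (S n)) \<le> q ^ Ll n * (q ^ M) ^ Ll n" .
    then have "real (card (S n)) * (1 / real CARD('m \<Rightarrow> 'a)) ^ n \<le> q ^ Ll n * (q ^ M) ^ Ll n * (1 / q ^ M) ^ n"
    proof -
      have "real CARD('m \<Rightarrow> 'a) = q ^ M" by (simp add: card_Q q_def M_def)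
      then show ?thesis using \<open>real (card (S n)) \<le> q ^ Ll n * (q ^ M) ^ Ll n\<close>
        by (simp only:) (rule mult_right_mono, auto)
    qed
    also have "\<dots> = q powr (real (Ll n) + real M * real (Ll n) - real M * real n)"
      using q by (intro num_low) auto
    also have "\<dots> \<le> q powr (real n * (- ((real M + 1) * \<epsilon>)))"
    proof (rule powr_mono)
      have "(real M + 1) * real (Ll n) \<le> (real M + 1) * ((\<alpha> - \<epsilon>) * real n)"
        using Ll by (intro mult_left_mono) auto
      moreover have "(real M + 1) * ((\<alpha> - \<epsilon>) * real n) = ((real M + 1) * \<alpha>) * real n - (real M + 1) * \<epsilon> * real n"
        by (simp add: algebra_simps)
      ultimately show "real (Ll n) + real M * real (Ll n) - real M * real n \<le> real n * (- ((real M + 1) * \<epsilon>))"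
        unfolding \<alpha>M by (simp add: algebra_simps)
    qed (use q in auto)
    also have "\<dots> = r ^ n" using q by (simp add: r_def powr_power)
    finally show ?thesis by simp
  qed
  have sub: "S n \<subseteq> Pn n" for n by (auto simp: S_def)
  from BC_aux[OF sub bound r]
  show ?thesis
  proof (rule AE_mp[OF _ AE_I2[OF impI]])
    fix a :: "nat \<Rightarrow> 'm \<Rightarrow> 'a"
    assume "eventually (\<lambda>n. restrict a {1..n} \<notin> S n) sequentially"
    then show "eventually (\<lambda>n. (real CARD('m) / (real CARD('m) + 1) - \<epsilon>) * real n \<le> real (lin_compl a n)) sequentially"
    proof (rule eventually_mono)
      fix n assume "restrict a {1..n} \<notin> S n"
      then have "\<not> good (Ll n) n (restrict a {1..n})" by (auto simp: S_def Pn_def)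
      then have "\<not> good (Ll n) n a" using good_cong[of n a "restrict a {1..n}" "Ll n"] by simp
      then have "Ll n < lin_compl a n" using lc_le_iff[of a n "Ll n"] by simp
      then have "real (Ll n) + 1 \<le> real (lin_compl a n)" by simp
      moreover have "(\<alpha> - \<epsilon>) * real n < real (Ll n) + 1"
      proof -
        have "0 \<le> (\<alpha> - \<epsilon>) * real n" using eps \<alpha>half by simp
        then have "real (Ll n) = real_of_int \<lfloor>(\<alpha> - \<epsilon>) * real n\<rfloor>" by (simp add: Ll_def)
        then show ?thesis using real_of_int_floor_add_one_gt[of "(\<alpha> - \<epsilon>) * real n"] by linarith
      qed
      ultimately show "(real CARD('m) / (real CARD('m) + 1) - \<epsilon>) * real n \<le> real (lin_compl a n)"
        by (simp add: \<alpha>_def M_def)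
    qed
  qed
qed

lemma high_AE:
  fixes \<epsilon> :: real
  assumes eps: "0 < \<epsilon>"
  shows "AE a in (\<Pi>\<^sub>M k\<in>{1::nat..}. (Mf k :: ('m::finite \<Rightarrow> 'a::{finite,field}) measure)).
           eventually (\<lambda>n. real (lin_compl a n) \<le> (real CARD('m) / (real CARD('m) + 1) + \<epsilon>) * real n) sequentially"
proof -
  define M where "M = CARD('m)"
  define \<alpha> where "\<alpha> = real M / (real M + 1)"
  define q where "q = real CARD('a)"
  have q: "q \<ge> 2" using card_ge2[where 'a='a] by (simp add: q_def)
  have M1: "M \<ge> 1" by (simp add: M_def Suc_le_eq)
  have \<alpha>M: "(real M + 1) * \<alpha> = real M" by (simp add: \<alpha>_def)
  have \<alpha>0: "\<alpha> \<ge> 0" by (simp add: \<alpha>_def)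
  define Lh where "Lh n = nat \<lfloor>(\<alpha> + \<epsilon>) * real n\<rfloor>" for n
  define S where "S n = {x \<in> Pn n. \<not> good (Lh n) n (x :: nat \<Rightarrow> 'm \<Rightarrow> 'a)}" for n
  define r where "r = q powr (- ((real M + 1) * \<epsilon>))"
  have r: "0 \<le> r" "r < 1" using q eps by (auto simp: r_def intro!: powr_less_one)
  have Lh_le: "real (Lh n) \<le> (\<alpha> + \<epsilon>) * real n" for n
    using eps \<alpha>0 by (simp add: Lh_def)
  have Lh_gt: "(\<alpha> + \<epsilon>) * real n < real (Lh n) + 1" for n
  proof -
    have "0 \<le> (\<alpha> + \<epsilon>) * real n" using eps \<alpha>0 by simp
    then have "real (Lh n) = real_of_int \<lfloor>(\<alpha> + \<epsilon>) * real n\<rfloor>" by (simp add: Lh_def)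
    then show ?thesis using real_of_int_floor_add_one_gt[of "(\<alpha> + \<epsilon>) * real n"] by linarith
  qed
  have QM: "real CARD('m \<Rightarrow> 'a) = q ^ M" by (simp add: card_Q q_def M_def)
  have bound: "real (card (S n)) * (1 / real CARD('m \<Rightarrow> 'a)) ^ n \<le> q powr (real M + 1) * r ^ n" for n
  proof (cases "n \<le> Lh n")
    case True
    have "S n = {}" using good_mono[OF good_n True] by (auto simp: S_def)
    then show ?thesis using r by simp
  next
    case False
    then have Ln: "Lh n \<le> n" "Lh n \<le> n * M" using M1 by (auto intro: order_trans[of _ n])
    have "card (S n) \<le> CARD('a) ^ ((n - Lh n) * CARD('m)) * CARD('a) ^ (n * CARD('m) - Lh n)"
      using card_high[where 'm='m and 'a='a, of n "Lh n"] by (simp add: S_def)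
    then have "real (card (S n)) \<le> real (CARD('a) ^ ((n - Lh n) * CARD('m)) * CARD('a) ^ (n * CARD('m) - Lh n))"
      by (simp only: of_nat_le_iff)
    also have "\<dots> = q ^ ((n - Lh n) * M) * q ^ (n * M - Lh n)" by (simp add: q_def M_def)
    finally have c: "real (card (S n)) \<le> q ^ ((n - Lh n) * M) * q ^ (n * M - Lh n)" .
    have "real (card (S n)) * (1 / real CARD('m \<Rightarrow> 'a)) ^ n \<le> q ^ ((n - Lh n) * M) * q ^ (n * M - Lh n) * (1 / q ^ M) ^ n"
      using c q by (simp only: QM) (rule mult_right_mono, auto)
    also have "\<dots> = q powr (real n * real M - real (Lh n) * real M - real (Lh n))"
      using q Ln by (intro num_high) auto
    also have "\<dots> \<le> q powr ((real M + 1) + real n * (- ((real M + 1) * \<epsilon>)))"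
    proof (rule powr_mono)
      have "(real M + 1) * ((\<alpha> + \<epsilon>) * real n) \<le> (real M + 1) * (real (Lh n) + 1)"
        using Lh_gt[of n] by (intro mult_left_mono) auto
      moreover have "(real M + 1) * ((\<alpha> + \<epsilon>) * real n) = ((real M + 1) * \<alpha>) * real n + (real M + 1) * \<epsilon> * real n"
        by (simp add: algebra_simps)
      ultimately show "real n * real M - real (Lh n) * real M - real (Lh n) \<le> (real M + 1) + real n * (- ((real M + 1) * \<epsilon>))"
        unfolding \<alpha>M by (simp add: algebra_simps)
    qed (use q in auto)
    also have "\<dots> = q powr (real M + 1) * r ^ n"
    proof -
      have "r ^ n = q powr (real n * (- ((real M + 1) * \<epsilon>)))" using q by (simp add: r_def powr_power)
      then show ?thesis by (simp only: powr_add)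
    qed
    finally show ?thesis .
  qed
  have sub: "S n \<subseteq> Pn n" for n by (auto simp: S_def)
  from BC_aux[OF sub bound r]
  show ?thesis
  proof (rule AE_mp[OF _ AE_I2[OF impI]])
    fix a :: "nat \<Rightarrow> 'm \<Rightarrow> 'a"
    assume "eventually (\<lambda>n. restrict a {1..n} \<notin> S n) sequentially"
    then show "eventually (\<lambda>n. real (lin_compl a n) \<le> (real CARD('m) / (real CARD('m) + 1) + \<epsilon>) * real n) sequentially"
    proof (rule eventually_mono)
      fix n assume "restrict a {1..n} \<notin> S n"
      then have "good (Lh n) n (restrict a {1..n})" by (auto simp: S_def Pn_def)
      then have "good (Lh n) n a" using good_cong[of n a "restrict a {1..n}" "Lh n"] by simp
      then have "lin_compl a n \<le> Lh n" using lc_le_iff[of a n "Lh n"] by simp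
      then have "real (lin_compl a n) \<le> real (Lh n)" by simp
      then show "real (lin_compl a n) \<le> (real CARD('m) / (real CARD('m) + 1) + \<epsilon>) * real n"
        using Lh_le[of n] by (simp add: \<alpha>_def M_def)
    qed
  qed
qed

lemma main_Mf:
  "AE a in (\<Pi>\<^sub>M k\<in>{1::nat..}. (Mf k :: ('m::finite \<Rightarrow> 'a::{finite,field}) measure)).
     (\<lambda>n. real (lin_compl a n) / real n) \<longlonglongrightarrow> real CARD('m) / (real CARD('m) + 1)"
proof -
  define \<alpha> where "\<alpha> = real CARD('m) / (real CARD('m) + 1)"
  define e where "e j = 1 / (real j + 2)" for j :: nat
  have e: "0 < e j" "e j \<le> 1/2" for j by (auto simp: e_def field_simps)
  have "\<forall>j. AE a in (\<Pi>\<^sub>M k\<in>{1::nat..}. (Mf k :: ('m \<Rightarrow> 'a) measure)).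
     eventually (\<lambda>n. (\<alpha> - e j) * real n \<le> real (lin_compl a n)) sequentially \<and>
     eventually (\<lambda>n. real (lin_compl a n) \<le> (\<alpha> + e j) * real n) sequentially"
    using low_AE[OF e, where 'm='m and 'a='a] high_AE[OF e(1), where 'm='m and 'a='a]
    by (auto simp: \<alpha>_def intro!: AE_conjI)
  then have "AE a in (\<Pi>\<^sub>M k\<in>{1::nat..}. (Mf k :: ('m \<Rightarrow> 'a) measure)). \<forall>j.
     eventually (\<lambda>n. (\<alpha> - e j) * real n \<le> real (lin_compl a n)) sequentially \<and>
     eventually (\<lambda>n. real (lin_compl a n) \<le> (\<alpha> + e j) * real n) sequentially"
    by (rule AE_all_countable[THEN iffD2])
  then show ?thesis
  proof (rule AE_mp[OF _ AE_I2[OF impI]])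
    fix a :: "nat \<Rightarrow> 'm \<Rightarrow> 'a"
    assume H: "\<forall>j. eventually (\<lambda>n. (\<alpha> - e j) * real n \<le> real (lin_compl a n)) sequentially \<and>
     eventually (\<lambda>n. real (lin_compl a n) \<le> (\<alpha> + e j) * real n) sequentially"
    show "(\<lambda>n. real (lin_compl a n) / real n) \<longlonglongrightarrow> real CARD('m) / (real CARD('m) + 1)"
      unfolding \<alpha>_def[symmetric]
    proof (rule LIMSEQ_I)
      fix r :: real assume "0 < r"
      then obtain j where j: "inverse (real (Suc j)) < r" using reals_Archimedean by blast
      have ejr: "e j < r"
      proof -
        have "e j \<le> inverse (real (Suc j))" by (simp add: e_def field_simps)
        then show ?thesis using j by linarith
      qed
      have "eventually (\<lambda>n. (\<alpha> - e j) * real n \<le> real (lin_compl a n) \<and>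
              real (lin_compl a n) \<le> (\<alpha> + e j) * real n \<and> 1 \<le> n) sequentially"
        using H by (intro eventually_conj) (auto simp: eventually_ge_at_top)
      then obtain N where N: "\<And>n. n \<ge> N \<Longrightarrow> (\<alpha> - e j) * real n \<le> real (lin_compl a n) \<and>
              real (lin_compl a n) \<le> (\<alpha> + e j) * real n \<and> 1 \<le> n"
        unfolding eventually_sequentially by blast
      have "norm (real (lin_compl a n) / real n - \<alpha>) < r" if "n \<ge> N" for n
      proof -
        from N[OF that] have n0: "real n > 0" and lo: "(\<alpha> - e j) * real n \<le> real (lin_compl a n)"
          and hi: "real (lin_compl a n) \<le> (\<alpha> + e j) * real n" by auto
        have "\<alpha> - e j \<le> real (lin_compl a n) / real n" using lo n0 by (simp add: pos_le_divide_eq)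
        moreover have "real (lin_compl a n) / real n \<le> \<alpha> + e j" using hi n0 by (simp add: pos_divide_le_eq)
        ultimately show ?thesis using ejr by (simp add: abs_le_iff abs_less_iff)
      qed
      then show "\<exists>no. \<forall>n\<ge>no. norm (real (lin_compl a n) / real n - \<alpha>) < r" by blast
    qed
  qed
qed

theorem mainTheorem16:
  "AE a in (\<Pi>\<^sub>M k\<in>{1::nat..}. measure_pmf (pmf_of_set (UNIV :: ('m::finite \<Rightarrow> 'a::{finite,field}) set))).
     (\<lambda>n. real (lin_compl a n) / real n) \<longlonglongrightarrow> real CARD('m) / (real CARD('m) + 1)"
  using main_Mf[where 'm='m and 'a='a] unfolding Mf_def .

end
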